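(* Let $\mathcal{H}$ and $\mathcal{H}_{\rm mem}$ be finite-dimensional Hilbert spaces and $U$ a unitary on $\mathcal{H}\otimes\mathcal{H}_{\rm mem}$ generating a memory channel of finite memory depth $\Delta_U=n$. Let $\Xi_1=R_1\otimes\cdots\otimes R_n$ and $\Xi_2=R'_1\otimes\cdots\otimes R'_n$ be product states of $n$ inputs (reset sequences), let $\omega_{12}$ be an arbitrary (possibly correlated) state of two copies of $\mathcal{H}$, and let $\xi$ be any memory state. Feed the memory channel $2n+2$ inputs: inputs $1,\dots,n$ in state $\Xi_1$, inputs $n+2,\dots,2n+1$ in state $\Xi_2$, and inputs $n+1$ and $2n+2$ jointly in state $\omega_{12}$. Then the joint output state of inputs $n+1$ and $2n+2$, $$\mathrm{tr}_{\text{all other outputs},\,\rm mem}\big[U_{2n+2}\cdots U_1(\Xi_1\otimes\omega_{12}\otimes\Xi_2\otimes\xi)U_1^\dagger\cdots U_{2n+2}^\dagger\big]$$ (with the factors placed at the appropriate input positions), equals $(\mathcal{E}_{\Xi_1}\otimes\mathcal{E}_{\Xi_2})[\omega_{12}]$, independently of $\xi$, where for a product reset sequence $\Xi$ of $n$ inputs $\mathcal{E}_\Xi[\omega]=\mathrm{tr}_{\rm res,mem}[U_{n+1}\cdots U_1(\Xi\otimes\omega\otimes\xi')U_1^\dagger\cdots U_{n+1}^\dagger]$ for any memory state $\xi'$ (this does not depend on $\xi'$).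
   Context: A memory channel generated by a fixed unitary $U$ on $\mathcal{H}\otimes\mathcal{H}_{\rm mem}$: for $m$ uses, inputs on $\mathcal{H}^{\otimes m}$ and memory initially in state $\xi$ are transformed by $U_m\cdots U_1$, where $U_j$ denotes $U$ acting on the $j$th input and the memory (identity elsewhere), and the memory is then traced out. For uncorrelated inputs $\varrho_1,\varrho_2,\dots$ and initial memory $\xi_1$, the $j$th input undergoes $\mathcal{E}_j[\varrho]=\mathrm{tr}_{\rm mem}[U(\varrho\otimes\xi_j)U^\dagger]$ with $\xi_{j+1}=\mathrm{tr}_{\rm sys}[U(\varrho_j\otimes\xi_j)U^\dagger]$. The memory depth $\Delta_U$ is the smallest integer $\Delta\ge0$ such that for every $m>\Delta$ the channel $\mathcal{E}_m$ is independent of $\xi_1$ and of $\varrho_j$ for $j<m-\Delta$ (for all choices); equivalently, for every memory state and every product sequence of $\Delta$ inputs, the channel on the next input does not depend on the memory state preceding those $\Delta$ inputs. *)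

theory Defs
  imports Complex_Main
begin

text \<open>Operators on a finite-dimensional Hilbert space with orthonormal basis indexed
  by a finite type 'i are represented by their matrices 'i \<Rightarrow> 'i \<Rightarrow> complex.
  The system space H has basis type 'a, the memory space H_mem has basis type 'b.
  Operators on m inputs plus memory are matrices indexed by pairs (xs, b) with
  xs a list of length m (the basis label of each input) and b a memory label.\<close>

type_synonym 'i op = "'i \<Rightarrow> 'i \<Rightarrow> complex"

definition is_state :: "'i::finite op \<Rightarrow> bool" where
  "is_state \<rho> \<longleftrightarrow>
     (\<forall>v::'i \<Rightarrow> complex. (\<Sum>x\<in>UNIV. \<Sum>y\<in>UNIV. cnj (v x) * \<rho> x y * v y) \<in> \<real> \<and>
                          0 \<le> Re (\<Sum>x\<in>UNIV. \<Sum>y\<in>UNIV. cnj (v x) * \<rho> x y * v y))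
   \<and> (\<Sum>x\<in>UNIV. \<rho> x x) = 1"

definition unitary_op :: "'i::finite op \<Rightarrow> bool" where
  "unitary_op U \<longleftrightarrow>
     (\<forall>x z. (\<Sum>y\<in>UNIV. U x y * cnj (U z y)) = (if x = z then 1 else 0)) \<and>
     (\<forall>x z. (\<Sum>y\<in>UNIV. cnj (U y x) * U y z) = (if x = z then 1 else 0))"

definition lists_len :: "nat \<Rightarrow> 'a list set" where
  "lists_len m = {xs. length xs = m}"

text \<open>U acting on input j (0-based) and the memory, identity elsewhere.\<close>
definition act_on :: "('a \<times> 'b) op \<Rightarrow> nat \<Rightarrow> ('a list \<times> 'b) op" where
  "act_on U j = (\<lambda>(xs, b) (ys, c).
     if length xs = length ys \<and> j < length xs \<and> (\<forall>i<length xs. i \<noteq> j \<longrightarrow> xs ! i = ys ! i)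
     then U (xs ! j, b) (ys ! j, c) else 0)"

definition conj_by :: "nat \<Rightarrow> ('a list \<times> 'b::finite) op \<Rightarrow> ('a list \<times> 'b) op \<Rightarrow> ('a list \<times> 'b) op" where
  "conj_by m V \<rho> = (\<lambda>x z. \<Sum>y\<in>lists_len m \<times> UNIV. \<Sum>w\<in>lists_len m \<times> UNIV.
       V x y * \<rho> y w * cnj (V z w))"

text \<open>U_m \<cdots> U_1 \<rho> U_1^dagger \<cdots> U_m^dagger  (U_1 applied first).\<close>
definition evolve :: "nat \<Rightarrow> ('a \<times> 'b::finite) op \<Rightarrow> ('a list \<times> 'b) op \<Rightarrow> ('a list \<times> 'b) op" where
  "evolve m U \<rho> = fold (\<lambda>j \<sigma>. conj_by m (act_on U j) \<sigma>) [0..<m] \<rho>"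

definition prod_in :: "(nat \<Rightarrow> 'a op) \<Rightarrow> nat \<Rightarrow> 'b op \<Rightarrow> ('a list \<times> 'b) op" where
  "prod_in \<rho>s m \<xi> = (\<lambda>(xs, b) (ys, c). (\<Prod>i<m. \<rho>s i (xs ! i) (ys ! i)) * \<xi> b c)"

definition ptrace1 :: "nat \<Rightarrow> nat \<Rightarrow> ('a::finite list \<times> 'b::finite) op \<Rightarrow> 'a op" where
  "ptrace1 m p \<rho> = (\<lambda>a a'. \<Sum>(xs, b)\<in>{xs\<in>lists_len m. xs ! p = a} \<times> UNIV.
       \<rho> (xs, b) (xs[p := a'], b))"

definition ptrace2 :: "nat \<Rightarrow> nat \<Rightarrow> nat \<Rightarrow> ('a::finite list \<times> 'b::finite) op \<Rightarrow> ('a \<times> 'a) op" where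
  "ptrace2 m p q \<rho> = (\<lambda>(a1, a2) (a1', a2').
     \<Sum>(xs, b)\<in>{xs\<in>lists_len m. xs ! p = a1 \<and> xs ! q = a2} \<times> UNIV.
       \<rho> (xs, b) (xs[p := a1', q := a2'], b))"

text \<open>The channel E on the input following the n inputs R 0, ..., R (n-1), with initial
  memory \<xi>: E[\<omega>] = tr_{res,mem}[U_{n+1} \<cdots> U_1 (R \<otimes> \<omega> \<otimes> \<xi>) U_1^dagger \<cdots> U_{n+1}^dagger].\<close>
definition chan :: "('a::finite \<times> 'b::finite) op \<Rightarrow> nat \<Rightarrow> (nat \<Rightarrow> 'a op) \<Rightarrow> 'b op \<Rightarrow> 'a op \<Rightarrow> 'a op" where
  "chan U n R \<xi> \<omega> =
     ptrace1 (Suc n) n (evolve (Suc n) U (prod_in (\<lambda>i. if i < n then R i else \<omega>) (Suc n) \<xi>))"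

definition depth_ok :: "('a::finite \<times> 'b::finite) op \<Rightarrow> nat \<Rightarrow> bool" where
  "depth_ok U \<Delta> \<longleftrightarrow>
     (\<forall>\<xi>1 \<xi>2 R. is_state \<xi>1 \<and> is_state \<xi>2 \<and> (\<forall>i<\<Delta>. is_state (R i)) \<longrightarrow>
        (\<forall>\<rho>. is_state \<rho> \<longrightarrow> chan U \<Delta> R \<xi>1 \<rho> = chan U \<Delta> R \<xi>2 \<rho>))"

definition memory_depth :: "('a::finite \<times> 'b::finite) op \<Rightarrow> nat" where
  "memory_depth U = (LEAST \<Delta>. depth_ok U \<Delta>)"

definition unit_op :: "'a \<Rightarrow> 'a \<Rightarrow> 'a op" where
  "unit_op a a' = (\<lambda>x y. if x = a \<and> y = a' then 1 else 0)"

text \<open>(E1 \<otimes> E2)[\<omega>12], by linear extension from matrix units.\<close>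
definition chan_tensor :: "('a::finite op \<Rightarrow> 'a op) \<Rightarrow> ('a op \<Rightarrow> 'a op) \<Rightarrow> ('a \<times> 'a) op \<Rightarrow> ('a \<times> 'a) op" where
  "chan_tensor E1 E2 \<omega> = (\<lambda>(x1, x2) (y1, y2).
     \<Sum>a\<in>UNIV. \<Sum>a'\<in>UNIV. \<Sum>c\<in>UNIV. \<Sum>c'\<in>UNIV. \<omega> (a, c) (a', c') * E1 (unit_op a a') x1 y1 * E2 (unit_op c c') x2 y2)"

text \<open>Input for 2n+2 uses: R on inputs 1..n, \<omega>12 jointly on inputs n+1 and 2n+2,
  R' on inputs n+2..2n+1, memory \<xi> (0-based positions in the lists).\<close>
definition joint_in :: "nat \<Rightarrow> (nat \<Rightarrow> 'a op) \<Rightarrow> (nat \<Rightarrow> 'a op) \<Rightarrow> ('a \<times> 'a) op \<Rightarrow> 'b op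
    \<Rightarrow> ('a list \<times> 'b) op" where
  "joint_in n R R' \<omega> \<xi> = (\<lambda>(xs, b) (ys, c).
     (\<Prod>i<n. R i (xs ! i) (ys ! i)) *
     \<omega> (xs ! n, xs ! (2 * n + 1)) (ys ! n, ys ! (2 * n + 1)) *
     (\<Prod>i<n. R' i (xs ! (n + 1 + i)) (ys ! (n + 1 + i))) *
     \<xi> b c)"

end

theory Submission
  imports Defs
begin


lemma finite_lists_len[simp]: "finite (lists_len m :: 'a::finite list set)"
proof -
  have "lists_len m = {xs::'a list. set xs \<subseteq> UNIV \<and> length xs = m}" by (auto simp: lists_len_def)
  then show ?thesis using finite_lists_length_eq[of "UNIV::'a set" m] by simp
qed

lemma sum_lists_len_add:
  fixes f :: "'a::finite list \<Rightarrow> 'c::comm_monoid_add"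
  shows "(\<Sum>zs\<in>lists_len (k+l). f zs) = (\<Sum>xs\<in>lists_len k. \<Sum>ys\<in>lists_len l. f (xs @ ys))"
proof -
  have img: "lists_len (k+l) = (\<lambda>(xs,ys). xs@ys) ` (lists_len k \<times> lists_len l :: ('a list \<times> 'a list) set)"
  proof (rule set_eqI, rule iffI)
    fix zs :: "'a list" assume "zs \<in> lists_len (k+l)"
    then have "(take k zs, drop k zs) \<in> lists_len k \<times> lists_len l"
      by (auto simp: lists_len_def)
    then show "zs \<in> (\<lambda>(xs,ys). xs@ys) ` (lists_len k \<times> lists_len l)"
      by (rule rev_image_eqI) simp
  qed (auto simp: lists_len_def)
  have inj: "inj_on (\<lambda>(xs,ys). xs@ys) (lists_len k \<times> lists_len l :: ('a list \<times> 'a list) set)"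
    by (auto simp: inj_on_def lists_len_def)
  show ?thesis
    by (simp add: img sum.reindex[OF inj] sum.cartesian_product prod.case_distrib)
qed

lemma sum_lists_len_1:
  fixes f :: "'a::finite list \<Rightarrow> 'c::comm_monoid_add"
  shows "(\<Sum>zs\<in>lists_len (Suc 0). f zs) = (\<Sum>x\<in>UNIV. f [x])"
proof -
  have img: "lists_len (Suc 0) = (\<lambda>x. [x]) ` (UNIV::'a set)"
    by (auto simp: lists_len_def length_Suc_conv)
  have inj: "inj (\<lambda>x::'a. [x])" by (auto simp: inj_on_def)
  show ?thesis by (simp add: img sum.reindex[OF inj])
qed

lemma swap4: "(\<Sum>a\<in>A. \<Sum>b\<in>B. \<Sum>c\<in>C. \<Sum>d\<in>D. f a b c d) = (\<Sum>c\<in>C. \<Sum>d\<in>D. \<Sum>a\<in>A. \<Sum>b\<in>B. f a b c d)"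
proof -
  have "(\<Sum>a\<in>A. \<Sum>b\<in>B. \<Sum>c\<in>C. \<Sum>d\<in>D. f a b c d) = (\<Sum>a\<in>A. \<Sum>c\<in>C. \<Sum>b\<in>B. \<Sum>d\<in>D. f a b c d)"
    by (rule sum.cong[OF refl], rule sum.swap)
  also have "\<dots> = (\<Sum>c\<in>C. \<Sum>a\<in>A. \<Sum>b\<in>B. \<Sum>d\<in>D. f a b c d)" by (rule sum.swap)
  also have "\<dots> = (\<Sum>c\<in>C. \<Sum>a\<in>A. \<Sum>d\<in>D. \<Sum>b\<in>B. f a b c d)"
    by (rule sum.cong[OF refl], rule sum.cong[OF refl], rule sum.swap)
  also have "\<dots> = (\<Sum>c\<in>C. \<Sum>d\<in>D. \<Sum>a\<in>A. \<Sum>b\<in>B. f a b c d)"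
    by (rule sum.cong[OF refl], rule sum.swap)
  finally show ?thesis .
qed

lemma rearr:
  fixes a c :: "'y \<Rightarrow> complex"
  shows "(\<Sum>y\<in>D. \<Sum>w\<in>D. a y * (\<Sum>y'\<in>E. \<Sum>w'\<in>E. B y y' * r y' w' * cnj (C w w')) * cnj (c w))
    = (\<Sum>y'\<in>E. \<Sum>w'\<in>E. (\<Sum>y\<in>D. a y * B y y') * r y' w' * cnj (\<Sum>w\<in>D. c w * C w w'))"
proof -
  have "(\<Sum>y\<in>D. \<Sum>w\<in>D. a y * (\<Sum>y'\<in>E. \<Sum>w'\<in>E. B y y' * r y' w' * cnj (C w w')) * cnj (c w))
     = (\<Sum>y\<in>D. \<Sum>w\<in>D. \<Sum>y'\<in>E. \<Sum>w'\<in>E. a y * B y y' * r y' w' * cnj (C w w') * cnj (c w))"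
    by (simp add: sum_distrib_left sum_distrib_right mult_ac)
  also have "\<dots> = (\<Sum>y'\<in>E. \<Sum>w'\<in>E. \<Sum>y\<in>D. \<Sum>w\<in>D. a y * B y y' * r y' w' * cnj (C w w') * cnj (c w))"
    by (rule swap4)
  also have "\<dots> = (\<Sum>y'\<in>E. \<Sum>w'\<in>E. (\<Sum>y\<in>D. a y * B y y') * r y' w' * cnj (\<Sum>w\<in>D. c w * C w w'))"
    by (simp add: sum_distrib_left sum_distrib_right mult_ac)
  finally show ?thesis .
qed

definition Mop :: "('a \<times> 'b) op \<Rightarrow> 'a \<Rightarrow> 'a \<Rightarrow> 'b op" where
  "Mop U x y = (\<lambda>b c. U (x,b) (y,c))"
definition mm :: "'b::finite op \<Rightarrow> 'b op \<Rightarrow> 'b op" where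
  "mm A B = (\<lambda>c e. \<Sum>d\<in>UNIV. A c d * B d e)"
definition idm :: "'b op" where
  "idm = (\<lambda>c e. if c = e then 1 else 0)"

fun chain :: "('a \<times> 'b::finite) op \<Rightarrow> 'a list \<Rightarrow> 'a list \<Rightarrow> 'b op" where
  "chain U [] ys = idm"
| "chain U (x#xs) ys = mm (chain U xs (tl ys)) (Mop U x (hd ys))"

lemma mm_assoc: "mm (mm A B) C = mm A (mm B C)"
  unfolding mm_def
proof (intro ext)
  fix c e
  have "(\<Sum>d\<in>UNIV. (\<Sum>d'\<in>UNIV. A c d' * B d' d) * C d e) = (\<Sum>d\<in>UNIV. \<Sum>d'\<in>UNIV. A c d' * B d' d * C d e)"
    by (simp add: sum_distrib_right)
  also have "\<dots> = (\<Sum>d'\<in>UNIV. \<Sum>d\<in>UNIV. A c d' * B d' d * C d e)" by (rule sum.swap)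
  also have "\<dots> = (\<Sum>d'\<in>UNIV. A c d' * (\<Sum>d\<in>UNIV. B d' d * C d e))"
    by (simp add: sum_distrib_left mult_ac)
  finally show "(\<Sum>d\<in>UNIV. (\<Sum>d'\<in>UNIV. A c d' * B d' d) * C d e) = (\<Sum>d'\<in>UNIV. A c d' * (\<Sum>d\<in>UNIV. B d' d * C d e))" .
qed

lemma mm_idm_left[simp]: "mm idm A = A"
proof (intro ext)
  fix c e
  have "(\<Sum>d\<in>UNIV. (if c = d then 1 else 0) * A d e) = (\<Sum>d\<in>UNIV. if d = c then A d e else 0)"
    by (rule sum.cong) auto
  then show "mm idm A c e = A c e" by (simp add: mm_def idm_def)
qed
lemma mm_idm_right[simp]: "mm A idm = A"
proof (intro ext)
  fix c e
  have "(\<Sum>d\<in>UNIV. A c d * (if d = e then 1 else 0)) = (\<Sum>d\<in>UNIV. if d = e then A c d else 0)"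
    by (rule sum.cong) auto
  then show "mm A idm c e = A c e" by (simp add: mm_def idm_def)
qed

lemma chain_append:
  "length xs1 = length ys1 \<Longrightarrow> chain U (xs1 @ xs2) (ys1 @ ys2) = mm (chain U xs2 ys2) (chain U xs1 ys1)"
proof (induction xs1 arbitrary: ys1)
  case Nil then show ?case by simp
next
  case (Cons x xs1)
  then obtain y ys1' where ys: "ys1 = y # ys1'" "length xs1 = length ys1'" by (cases ys1) auto
  show ?case using Cons.IH[OF ys(2)] by (simp add: ys mm_assoc)
qed

lemma chain_single[simp]: "chain U [x] [y] = Mop U x y"
  by simp

lemma chain_snoc:
  "length xs = length ys \<Longrightarrow> chain U (xs @ [x]) (ys @ [y]) = mm (Mop U x y) (chain U xs ys)"
  by (simp add: chain_append del: chain.simps(2))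




lemma sum_agree_reindex:
  fixes g :: "'a::finite list \<Rightarrow> 'c::comm_monoid_add"
  assumes xs: "length xs = m" and k: "k < m"
  shows "(\<Sum>zs\<in>lists_len m. if (\<forall>i<m. i \<noteq> k \<longrightarrow> xs ! i = zs ! i) then g zs else 0)
       = (\<Sum>z\<in>UNIV. g (xs[k := z]))"
proof -
  have set: "{zs \<in> lists_len m. \<forall>i<m. i \<noteq> k \<longrightarrow> xs ! i = zs ! i} = range (\<lambda>z. xs[k := z])"
  proof (rule set_eqI, rule iffI)
    fix zs assume "zs \<in> {zs \<in> lists_len m. \<forall>i<m. i \<noteq> k \<longrightarrow> xs ! i = zs ! i}"
    then have zs: "length zs = m" "\<forall>i<m. i \<noteq> k \<longrightarrow> xs ! i = zs ! i" by (auto simp: lists_len_def)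
    have "zs = xs[k := zs ! k]"
      by (rule nth_equalityI) (use zs xs k in \<open>auto simp: nth_list_update\<close>)
    then show "zs \<in> range (\<lambda>z. xs[k := z])" by blast
  qed (use xs in \<open>auto simp: lists_len_def nth_list_update\<close>)
  have inj: "inj (\<lambda>z. xs[k := z])"
    by (rule injI) (metis k xs nth_list_update_eq)
  have "(\<Sum>zs\<in>lists_len m. if (\<forall>i<m. i \<noteq> k \<longrightarrow> xs ! i = zs ! i) then g zs else 0)
      = (\<Sum>zs\<in>{zs \<in> lists_len m. \<forall>i<m. i \<noteq> k \<longrightarrow> xs ! i = zs ! i}. g zs)"
    by (simp add: sum.inter_filter)
  also have "\<dots> = (\<Sum>z\<in>UNIV. g (xs[k := z]))"
    by (simp add: set sum.reindex[OF inj])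
  finally show ?thesis .
qed

definition Wk :: "('a \<times> 'b::finite) op \<Rightarrow> nat \<Rightarrow> ('a list \<times> 'b) op" where
  "Wk U k = (\<lambda>(xs,b) (ys,c). if drop k xs = drop k ys then chain U (take k xs) (take k ys) b c else 0)"

lemma Wk_step:
  fixes U :: "('a::finite \<times> 'b::finite) op"
  assumes xs: "length xs = m" and ys: "length ys = m" and k: "k < m"
  shows "(\<Sum>(zs,d)\<in>lists_len m \<times> UNIV. act_on U k (xs,b) (zs,d) * Wk U k (zs,d) (ys,c))
       = Wk U (Suc k) (xs,b) (ys,c)"
proof -
  have "(\<Sum>(zs,d)\<in>lists_len m \<times> UNIV. act_on U k (xs,b) (zs,d) * Wk U k (zs,d) (ys,c))
      = (\<Sum>zs\<in>lists_len m. \<Sum>d\<in>UNIV. act_on U k (xs,b) (zs,d) * Wk U k (zs,d) (ys,c))"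
    by (simp add: sum.cartesian_product)
  also have "\<dots> = (\<Sum>zs\<in>lists_len m. if (\<forall>i<m. i \<noteq> k \<longrightarrow> xs ! i = zs ! i) then
        (\<Sum>d\<in>UNIV. U (xs!k, b) (zs!k, d) * Wk U k (zs,d) (ys,c)) else 0)"
  proof (rule sum.cong[OF refl])
    fix zs :: "'a list" assume "zs \<in> lists_len m"
    then have zl: "length zs = m" by (simp add: lists_len_def)
    show "(\<Sum>d\<in>UNIV. act_on U k (xs,b) (zs,d) * Wk U k (zs,d) (ys,c)) = (if (\<forall>i<m. i \<noteq> k \<longrightarrow> xs ! i = zs ! i) then
        (\<Sum>d\<in>UNIV. U (xs!k, b) (zs!k, d) * Wk U k (zs,d) (ys,c)) else 0)"
    proof (cases "\<forall>i<m. i \<noteq> k \<longrightarrow> xs ! i = zs ! i")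
      case False
      then have F: "(\<forall>i<m. i \<noteq> k \<longrightarrow> xs ! i = zs ! i) = False" by simp
      show ?thesis by (simp only: F act_on_def xs zl k if_False split) simp
    qed (simp_all add: act_on_def xs zl k)
  qed
  also have "\<dots> = (\<Sum>z\<in>UNIV. \<Sum>d\<in>UNIV. U (xs!k, b) (z, d) * Wk U k (xs[k:=z],d) (ys,c))"
    by (subst sum_agree_reindex[OF xs k]) (use xs k in simp)
  also have "\<dots> = (\<Sum>z\<in>UNIV. if z = ys ! k then (\<Sum>d\<in>UNIV. U (xs!k, b) (z, d) *
        (if drop (Suc k) xs = drop (Suc k) ys then chain U (take k xs) (take k ys) d c else 0)) else 0)"
  proof (rule sum.cong[OF refl])
    fix z
    have d1: "drop k (xs[k:=z]) = z # drop (Suc k) xs"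
      using xs k by (metis Cons_nth_drop_Suc drop_update_cancel length_list_update lessI nth_list_update_eq)
    have d2: "drop k ys = ys ! k # drop (Suc k) ys" using ys k by (simp add: Cons_nth_drop_Suc)
    have t: "take k (xs[k:=z]) = take k xs" by simp
    show "(\<Sum>d\<in>UNIV. U (xs!k, b) (z, d) * Wk U k (xs[k:=z],d) (ys,c)) = (if z = ys ! k then (\<Sum>d\<in>UNIV. U (xs!k, b) (z, d) *
        (if drop (Suc k) xs = drop (Suc k) ys then chain U (take k xs) (take k ys) d c else 0)) else 0)"
      unfolding Wk_def split t by (simp add: d1 d2)
  qed
  also have "\<dots> = (\<Sum>d\<in>UNIV. U (xs!k, b) (ys!k, d) *
        (if drop (Suc k) xs = drop (Suc k) ys then chain U (take k xs) (take k ys) d c else 0))"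
    by simp
  also have "\<dots> = Wk U (Suc k) (xs,b) (ys,c)"
  proof (cases "drop (Suc k) xs = drop (Suc k) ys")
    case True
    have "take (Suc k) xs = take k xs @ [xs!k]" "take (Suc k) ys = take k ys @ [ys!k]"
      using xs ys k by (simp_all add: take_Suc_conv_app_nth)
    then show ?thesis using True xs ys k
      by (simp add: Wk_def chain_snoc mm_def Mop_def)
  qed (simp add: Wk_def)
  finally show ?thesis .
qed

lemma Wk_step':
  fixes U :: "('a::finite \<times> 'b::finite) op"
  assumes x: "x \<in> lists_len m \<times> UNIV" and y: "y \<in> lists_len m \<times> UNIV" and k: "k < m"
  shows "(\<Sum>v\<in>lists_len m \<times> UNIV. act_on U k x v * Wk U k v y) = Wk U (Suc k) x y"
proof -
  obtain xs b where xb: "x = (xs,b)" by (cases x)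
  obtain ys c where yc: "y = (ys,c)" by (cases y)
  have "(\<lambda>v. act_on U k x v * Wk U k v y) = (\<lambda>(zs,d). act_on U k (xs,b) (zs,d) * Wk U k (zs,d) (ys,c))"
    by (auto simp: xb yc)
  then show ?thesis using Wk_step[of xs m ys k U b c] x y k by (simp add: xb yc lists_len_def)
qed

lemma sum_pair: "(\<Sum>y\<in>A \<times> B. g y) = (\<Sum>a\<in>A. \<Sum>b\<in>B. g (a,b))"
  by (simp add: sum.cartesian_product)

lemma Wk_0: "Wk U 0 x y = (if y = x then 1 else 0)"
  by (cases x, cases y) (auto simp: Wk_def idm_def)

lemma evolve_fold:
  fixes U :: "('a::finite \<times> 'b::finite) op"
  assumes "k \<le> m" "x \<in> lists_len m \<times> UNIV" "z \<in> lists_len m \<times> UNIV"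
  shows "fold (\<lambda>j \<sigma>. conj_by m (act_on U j) \<sigma>) [0..<k] \<rho> x z
    = (\<Sum>y\<in>lists_len m \<times> UNIV. \<Sum>w\<in>lists_len m \<times> UNIV. Wk U k x y * \<rho> y w * cnj (Wk U k z w))"
  using assms
proof (induction k arbitrary: x z)
  case 0
  have "(\<Sum>y\<in>lists_len m \<times> UNIV. \<Sum>w\<in>lists_len m \<times> UNIV. Wk U 0 x y * \<rho> y w * cnj (Wk U 0 z w))
     = (\<Sum>y\<in>lists_len m \<times> UNIV. if y = x then (\<Sum>w\<in>lists_len m \<times> UNIV. if w = z then \<rho> y w else 0) else 0)"
  proof (rule sum.cong[OF refl])
    fix y
    have cw: "\<And>w. Wk U 0 x y * \<rho> y w * cnj (Wk U 0 z w) = (if y = x then (if w = z then \<rho> y w else 0) else 0)" by (simp add: Wk_0)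
    show "(\<Sum>w\<in>lists_len m \<times> UNIV. Wk U 0 x y * \<rho> y w * cnj (Wk U 0 z w)) =
      (if y = x then \<Sum>w\<in>lists_len m \<times> UNIV. if w = z then \<rho> y w else 0 else 0)"
      unfolding cw by simp
  qed
  also have "\<dots> = \<rho> x z" using 0 by (simp add: sum.delta)
  finally show ?case by simp
next
  case (Suc k)
  let ?D = "lists_len m \<times> (UNIV :: 'b set)"
  let ?f = "\<lambda>j \<sigma>. conj_by m (act_on U j) \<sigma>"
  define \<sigma> where "\<sigma> = fold ?f [0..<k] \<rho>"
  have IH: "\<And>y w. y \<in> ?D \<Longrightarrow> w \<in> ?D \<Longrightarrow> \<sigma> y w = (\<Sum>y'\<in>?D. \<Sum>w'\<in>?D. Wk U k y y' * \<rho> y' w' * cnj (Wk U k w w'))"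
    unfolding \<sigma>_def using Suc.IH Suc.prems by auto
  have "fold ?f [0..<Suc k] \<rho> x z = conj_by m (act_on U k) \<sigma> x z" by (simp add: \<sigma>_def)
  also have "\<dots> = (\<Sum>y\<in>?D. \<Sum>w\<in>?D. act_on U k x y *
      (\<Sum>y'\<in>?D. \<Sum>w'\<in>?D. Wk U k y y' * \<rho> y' w' * cnj (Wk U k w w')) * cnj (act_on U k z w))"
    unfolding conj_by_def using IH by (intro sum.cong refl) auto
  also have "\<dots> = (\<Sum>y'\<in>?D. \<Sum>w'\<in>?D. (\<Sum>y\<in>?D. act_on U k x y * Wk U k y y') * \<rho> y' w'
      * cnj (\<Sum>w\<in>?D. act_on U k z w * Wk U k w w'))"
    by (rule rearr)
  also have "\<dots> = (\<Sum>y'\<in>?D. \<Sum>w'\<in>?D. Wk U (Suc k) x y' * \<rho> y' w' * cnj (Wk U (Suc k) z w'))"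
    using Suc.prems by (intro sum.cong refl) (simp add: Wk_step')
  finally show ?case .
qed

lemma evolve_formula:
  fixes U :: "('a::finite \<times> 'b::finite) op"
  assumes "length xs = m" "length xs' = m"
  shows "evolve m U \<rho> (xs,b) (xs',b')
    = (\<Sum>ys\<in>lists_len m. \<Sum>c\<in>UNIV. \<Sum>ws\<in>lists_len m. \<Sum>e\<in>UNIV.
         chain U xs ys b c * \<rho> (ys,c) (ws,e) * cnj (chain U xs' ws b' e))"
proof -
  have "evolve m U \<rho> (xs,b) (xs',b') = (\<Sum>y\<in>lists_len m \<times> UNIV. \<Sum>w\<in>lists_len m \<times> UNIV.
      Wk U m (xs,b) y * \<rho> y w * cnj (Wk U m (xs',b') w))"
    unfolding evolve_def using assms by (intro evolve_fold) (auto simp: lists_len_def)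
  also have "\<dots> = (\<Sum>y\<in>lists_len m \<times> UNIV. \<Sum>w\<in>lists_len m \<times> UNIV.
      chain U xs (fst y) b (snd y) * \<rho> y w * cnj (chain U xs' (fst w) b' (snd w)))"
    using assms by (intro sum.cong refl) (auto simp: Wk_def lists_len_def)
  also have "\<dots> = (\<Sum>ys\<in>lists_len m. \<Sum>c\<in>UNIV. \<Sum>ws\<in>lists_len m. \<Sum>e\<in>UNIV.
         chain U xs ys b c * \<rho> (ys,c) (ws,e) * cnj (chain U xs' ws b' e))"
    by (simp add: sum_pair)
  finally show ?thesis .
qed




definition sand :: "'b::finite op \<Rightarrow> 'b op \<Rightarrow> 'b op \<Rightarrow> 'b op" where
  "sand A X B = (\<lambda>d d'. \<Sum>c\<in>UNIV. \<Sum>e\<in>UNIV. A d c * X c e * cnj (B d' e))"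

definition SS :: "('a \<times> 'b::finite) op \<Rightarrow> nat \<Rightarrow> ('a list \<Rightarrow> 'a list \<Rightarrow> complex) \<Rightarrow> 'a list \<Rightarrow> 'a list \<Rightarrow> 'b op \<Rightarrow> 'b op" where
  "SS U m P xs xs' X = (\<lambda>d d'. \<Sum>ys\<in>lists_len m. \<Sum>ws\<in>lists_len m. P ys ws * sand (chain U xs ys) X (chain U xs' ws) d d')"

lemma evolve_SS:
  fixes U :: "('a::finite \<times> 'b::finite) op"
  assumes "length xs = m" "length xs' = m"
    and P: "\<And>ys ws c e. length ys = m \<Longrightarrow> length ws = m \<Longrightarrow> \<rho> (ys,c) (ws,e) = P ys ws * \<xi> c e"
  shows "evolve m U \<rho> (xs,b) (xs',b') = SS U m P xs xs' \<xi> b b'"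
proof -
  have "evolve m U \<rho> (xs,b) (xs',b') = (\<Sum>ys\<in>lists_len m. \<Sum>c\<in>UNIV. \<Sum>ws\<in>lists_len m. \<Sum>e\<in>UNIV.
         chain U xs ys b c * (P ys ws * \<xi> c e) * cnj (chain U xs' ws b' e))"
    unfolding evolve_formula[OF assms(1,2)] by (intro sum.cong refl) (simp add: P lists_len_def)
  also have "\<dots> = (\<Sum>ys\<in>lists_len m. \<Sum>ws\<in>lists_len m. \<Sum>c\<in>UNIV. \<Sum>e\<in>UNIV.
         chain U xs ys b c * (P ys ws * \<xi> c e) * cnj (chain U xs' ws b' e))"
    by (rule sum.cong[OF refl], rule sum.swap)
  also have "\<dots> = SS U m P xs xs' \<xi> b b'"
    unfolding SS_def sand_def by (simp add: sum_distrib_left mult_ac)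
  finally show ?thesis .
qed

lemma sand_mm: "sand (mm A2 A1) X (mm B2 B1) = sand A2 (sand A1 X B1) B2"
proof (intro ext)
  fix d d'
  show "sand (mm A2 A1) X (mm B2 B1) d d' = sand A2 (sand A1 X B1) B2 d d'"
    unfolding sand_def mm_def using rearr[where a="\<lambda>f. A2 d f" and B=A1 and r=X and C=B1 and c="\<lambda>g. B2 d' g" and D=UNIV and E=UNIV, symmetric]
    by simp
qed

lemma swap3: "(\<Sum>a\<in>A. \<Sum>b\<in>B. \<Sum>k\<in>K. f a b k) = (\<Sum>k\<in>K. \<Sum>a\<in>A. \<Sum>b\<in>B. f a b k)"
proof -
  have "(\<Sum>a\<in>A. \<Sum>b\<in>B. \<Sum>k\<in>K. f a b k) = (\<Sum>a\<in>A. \<Sum>k\<in>K. \<Sum>b\<in>B. f a b k)"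
    by (rule sum.cong[OF refl], rule sum.swap)
  also have "\<dots> = (\<Sum>k\<in>K. \<Sum>a\<in>A. \<Sum>b\<in>B. f a b k)" by (rule sum.swap)
  finally show ?thesis .
qed

lemma sand_lin:
  "sand A (\<lambda>c e. \<Sum>k\<in>K. \<alpha> k * f k c e) B d d' = (\<Sum>k\<in>K. \<alpha> k * sand A (f k) B d d')"
proof -
  have "sand A (\<lambda>c e. \<Sum>k\<in>K. \<alpha> k * f k c e) B d d' = (\<Sum>c\<in>UNIV. \<Sum>e\<in>UNIV. \<Sum>k\<in>K. \<alpha> k * (A d c * f k c e * cnj (B d' e)))"
    unfolding sand_def by (simp add: sum_distrib_left sum_distrib_right mult_ac)
  also have "\<dots> = (\<Sum>k\<in>K. \<Sum>c\<in>UNIV. \<Sum>e\<in>UNIV. \<alpha> k * (A d c * f k c e * cnj (B d' e)))" by (rule swap3)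
  also have "\<dots> = (\<Sum>k\<in>K. \<alpha> k * sand A (f k) B d d')"
    unfolding sand_def by (simp add: sum_distrib_left)
  finally show ?thesis .
qed

lemma sand_scal: "sand A (\<lambda>c e. \<alpha> * X c e) B d d' = \<alpha> * sand A X B d d'"
  using sand_lin[of A "\<lambda>_. \<alpha>" "\<lambda>_. X" "{()}" B d d'] by simp

lemma sand_sum:
  "sand A (\<lambda>c e. \<Sum>k\<in>K. f k c e) B d d' = (\<Sum>k\<in>K. sand A (f k) B d d')"
  using sand_lin[of A "\<lambda>_. 1" f K B d d'] by simp

lemma SS_lin:
  "SS U m P xs xs' (\<lambda>c e. \<Sum>k\<in>K. \<alpha> k * f k c e) d d' = (\<Sum>k\<in>K. \<alpha> k * SS U m P xs xs' (f k) d d')"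
proof -
  have "SS U m P xs xs' (\<lambda>c e. \<Sum>k\<in>K. \<alpha> k * f k c e) d d' = (\<Sum>ys\<in>lists_len m. \<Sum>ws\<in>lists_len m. \<Sum>k\<in>K.
       \<alpha> k * (P ys ws * sand (chain U xs ys) (f k) (chain U xs' ws) d d'))"
    unfolding SS_def sand_lin by (simp add: sum_distrib_left mult_ac)
  also have "\<dots> = (\<Sum>k\<in>K. \<Sum>ys\<in>lists_len m. \<Sum>ws\<in>lists_len m.
       \<alpha> k * (P ys ws * sand (chain U xs ys) (f k) (chain U xs' ws) d d'))" by (rule swap3)
  also have "\<dots> = (\<Sum>k\<in>K. \<alpha> k * SS U m P xs xs' (f k) d d')"
    unfolding SS_def by (simp add: sum_distrib_left)
  finally show ?thesis .
qed

lemma SS_sum: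
  "SS U m P xs xs' (\<lambda>c e. \<Sum>k\<in>K. f k c e) d d' = (\<Sum>k\<in>K. SS U m P xs xs' (f k) d d')"
  using SS_lin[of U m P xs xs' "\<lambda>_. 1" f K d d'] by simp

lemma SS_linP:
  "SS U m (\<lambda>ys ws. \<Sum>k\<in>K. \<alpha> k * P k ys ws) xs xs' X d d' = (\<Sum>k\<in>K. \<alpha> k * SS U m (P k) xs xs' X d d')"
proof -
  have "SS U m (\<lambda>ys ws. \<Sum>k\<in>K. \<alpha> k * P k ys ws) xs xs' X d d' = (\<Sum>ys\<in>lists_len m. \<Sum>ws\<in>lists_len m. \<Sum>k\<in>K.
       \<alpha> k * (P k ys ws * sand (chain U xs ys) X (chain U xs' ws) d d'))"
    unfolding SS_def by (simp add: sum_distrib_left sum_distrib_right mult_ac)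
  also have "\<dots> = (\<Sum>k\<in>K. \<Sum>ys\<in>lists_len m. \<Sum>ws\<in>lists_len m.
       \<alpha> k * (P k ys ws * sand (chain U xs ys) X (chain U xs' ws) d d'))" by (rule swap3)
  also have "\<dots> = (\<Sum>k\<in>K. \<alpha> k * SS U m (P k) xs xs' X d d')"
    unfolding SS_def by (simp add: sum_distrib_left)
  finally show ?thesis .
qed

lemma SS_comp:
  fixes U :: "('a::finite \<times> 'b::finite) op"
  assumes "length xs1 = k1" "length xs1' = k1" "length xs2 = k2" "length xs2' = k2"
    and P: "\<And>ys1 ws1 ys2 ws2. length ys1 = k1 \<Longrightarrow> length ws1 = k1 \<Longrightarrow> length ys2 = k2 \<Longrightarrow> length ws2 = k2
       \<Longrightarrow> P (ys1@ys2) (ws1@ws2) = P1 ys1 ws1 * P2 ys2 ws2"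
  shows "SS U (k1+k2) P (xs1@xs2) (xs1'@xs2') X = SS U k2 P2 xs2 xs2' (SS U k1 P1 xs1 xs1' X)"
proof (intro ext)
  fix d d'
  let ?L1 = "lists_len k1 :: 'a list set" and ?L2 = "lists_len k2 :: 'a list set"
  have "SS U (k1+k2) P (xs1@xs2) (xs1'@xs2') X d d' = (\<Sum>ys1\<in>?L1. \<Sum>ys2\<in>?L2. \<Sum>ws1\<in>?L1. \<Sum>ws2\<in>?L2.
      P1 ys1 ws1 * P2 ys2 ws2 * sand (chain U xs2 ys2) (sand (chain U xs1 ys1) X (chain U xs1' ws1)) (chain U xs2' ws2) d d')"
    unfolding SS_def sum_lists_len_add using assms
    by (intro sum.cong refl) (simp add: lists_len_def chain_append sand_mm)
  also have "\<dots> = (\<Sum>ys1\<in>?L1. \<Sum>ws1\<in>?L1. \<Sum>ys2\<in>?L2. \<Sum>ws2\<in>?L2.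
      P1 ys1 ws1 * P2 ys2 ws2 * sand (chain U xs2 ys2) (sand (chain U xs1 ys1) X (chain U xs1' ws1)) (chain U xs2' ws2) d d')"
    by (rule sum.cong[OF refl], rule sum.swap)
  also have "\<dots> = (\<Sum>ys2\<in>?L2. \<Sum>ws2\<in>?L2. \<Sum>ys1\<in>?L1. \<Sum>ws1\<in>?L1.
      P1 ys1 ws1 * P2 ys2 ws2 * sand (chain U xs2 ys2) (sand (chain U xs1 ys1) X (chain U xs1' ws1)) (chain U xs2' ws2) d d')"
    by (rule swap4)
  also have "\<dots> = SS U k2 P2 xs2 xs2' (SS U k1 P1 xs1 xs1' X) d d'"
    unfolding SS_def[of U k2] unfolding SS_def[of U k1] sand_sum sand_scal
    by (simp add: sum_distrib_left mult_ac)
  finally show "SS U (k1+k2) P (xs1@xs2) (xs1'@xs2') X d d' = SS U k2 P2 xs2 xs2' (SS U k1 P1 xs1 xs1' X) d d'" .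
qed

lemma SS_one:
  fixes U :: "('a::finite \<times> 'b::finite) op"
  shows "SS U (Suc 0) P [a] [a'] X = (\<lambda>d d'. \<Sum>y\<in>UNIV. \<Sum>w\<in>UNIV. P [y] [w] * sand (Mop U a y) X (Mop U a' w) d d')"
  unfolding SS_def sum_lists_len_1 by simp




lemma pure_state:
  fixes u :: "'i::finite \<Rightarrow> complex"
  assumes "(\<Sum>x\<in>UNIV. u x * cnj (u x)) = 1"
  shows "is_state (\<lambda>x y. u x * cnj (u y))"
  unfolding is_state_def
proof (intro conjI allI)
  fix v :: "'i \<Rightarrow> complex"
  define s where "s = (\<Sum>x\<in>UNIV. cnj (v x) * u x)"
  have "(\<Sum>x\<in>UNIV. \<Sum>y\<in>UNIV. cnj (v x) * (u x * cnj (u y)) * v y) = s * cnj s"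
    unfolding s_def by (simp add: sum_distrib_left sum_distrib_right mult_ac) (rule sum.swap)
  also have "\<dots> = of_real ((cmod s)^2)" by (rule complex_norm_square[symmetric])
  finally have eq: "(\<Sum>x\<in>UNIV. \<Sum>y\<in>UNIV. cnj (v x) * (u x * cnj (u y)) * v y) = of_real ((cmod s)^2)" .
  show "(\<Sum>x\<in>UNIV. \<Sum>y\<in>UNIV. cnj (v x) * (u x * cnj (u y)) * v y) \<in> \<real>" unfolding eq by simp
  show "0 \<le> Re (\<Sum>x\<in>UNIV. \<Sum>y\<in>UNIV. cnj (v x) * (u x * cnj (u y)) * v y)" unfolding eq by simp
qed (use assms in simp)

lemma sum_u2:
  fixes g :: "'i::finite \<Rightarrow> complex"
  assumes "c \<noteq> e"
  shows "(\<Sum>x\<in>UNIV. (if x = c then p else if x = e then q else 0) * g x) = p * g c + q * g e"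
proof -
  have "(\<Sum>x\<in>UNIV. (if x = c then p else if x = e then q else 0) * g x)
      = (\<Sum>x\<in>UNIV. (if x = c then p * g x else 0) + (if x = e then q * g x else 0))"
    using assms by (intro sum.cong) auto
  also have "\<dots> = p * g c + q * g e" by (simp add: sum.distrib)
  finally show ?thesis .
qed

lemma span:
  fixes K :: "'i::finite op"
  assumes H: "\<And>S. is_state S \<Longrightarrow> (\<Sum>c\<in>UNIV. \<Sum>e\<in>UNIV. S c e * K c e) = \<kappa>"
  shows "K c e = (if c = e then \<kappa> else 0)"
proof -
  have diag: "K x x = \<kappa>" for x
  proof -
    let ?u = "\<lambda>y::'i. if y = x then (1::complex) else 0"
    have st: "is_state (\<lambda>a b. ?u a * cnj (?u b))"
    proof (rule pure_state)
      have "\<And>a. ?u a * cnj (?u a) = (if a = x then 1 else 0)" by simp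
      then show "(\<Sum>a\<in>UNIV. ?u a * cnj (?u a)) = 1" by (simp only:) simp
    qed
    have "(\<Sum>a\<in>UNIV. \<Sum>b\<in>UNIV. ?u a * cnj (?u b) * K a b) = K x x"
    proof -
      have "\<And>a b. ?u a * cnj (?u b) * K a b = (if b = x then (if a = x then K a b else 0) else 0)" by simp
      then show ?thesis by simp
    qed
    then show ?thesis using H[OF st] by simp
  qed
  show ?thesis
  proof (cases "c = e")
    case True then show ?thesis using diag by simp
  next
    case ne: False
    define r where "r = complex_of_real (sqrt (1/2))"
    have rr: "r * r = 1/2"
    proof -
      have "r * r = complex_of_real (sqrt (1/2) * sqrt (1/2))" unfolding r_def by (simp only: of_real_mult)
      also have "\<dots> = complex_of_real (1/2)" by simp
      finally show ?thesis by simp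
    qed
    have cr: "cnj r = r" unfolding r_def by simp
    have gen: "(\<Sum>a\<in>UNIV. \<Sum>b\<in>UNIV. (if a = c then p else if a = e then q else 0) *
        cnj (if b = c then p else if b = e then q else 0) * K a b)
       = p * (cnj p * K c c + cnj q * K c e) + q * (cnj p * K e c + cnj q * K e e)" for p q
    proof -
      have "(\<Sum>a\<in>UNIV. \<Sum>b\<in>UNIV. (if a = c then p else if a = e then q else 0) *
        cnj (if b = c then p else if b = e then q else 0) * K a b)
        = (\<Sum>a\<in>UNIV. (if a = c then p else if a = e then q else 0) *
          (\<Sum>b\<in>UNIV. (if b = c then cnj p else if b = e then cnj q else 0) * K a b))"
        by (simp add: sum_distrib_left mult_ac if_distrib[of cnj] cong: if_cong)
      also have "\<dots> = p * (cnj p * K c c + cnj q * K c e) + q * (cnj p * K e c + cnj q * K e e)"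
        using ne by (simp add: sum_u2)
      finally show ?thesis .
    qed
    have st: "is_state (\<lambda>a b. (if a = c then p else if a = e then q else 0) *
        cnj (if b = c then p else if b = e then q else 0))" if "p * cnj p + q * cnj q = 1" for p q
    proof (rule pure_state)
      have "(\<Sum>x\<in>UNIV. (if x = c then p else if x = e then q else 0) * cnj (if x = c then p else if x = e then q else 0))
          = (\<Sum>x\<in>UNIV. (if x = c then p else if x = e then q else 0) * (if x = c then cnj p else if x = e then cnj q else 0))"
        by (intro sum.cong) auto
      also have "\<dots> = p * cnj p + q * cnj q" using ne
        by (subst sum_u2) auto
      finally show "(\<Sum>x\<in>UNIV. (if x = c then p else if x = e then q else 0) * cnj (if x = c then p else if x = e then q else 0)) = 1"
        using that by simp
    qed
    have e1: "r * (r * K c c + r * K c e) + r * (r * K e c + r * K e e) = \<kappa>"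
      using H[OF st[of r r]] gen[of r r] rr cr by simp
    have e2: "r * (r * K c c + cnj (\<i> * r) * K c e) + (\<i> * r) * (r * K e c + cnj (\<i> * r) * K e e) = \<kappa>"
      using H[OF st[of r "\<i> * r"]] gen[of r "\<i> * r"] rr cr by (simp add: algebra_simps)
    have e1': "K c e + K e c = 0"
    proof -
      have "(r * r) * (K c e + K e c) = 0" using e1 diag[of c] diag[of e] rr by (simp add: algebra_simps)
      then show ?thesis using rr by simp
    qed
    have e2': "K e c - K c e = 0"
    proof -
      have r0: "r \<noteq> 0" using rr by auto
      show ?thesis using e2 diag[of c] diag[of e] rr cr r0 by (simp add: algebra_simps)
    qed
    from e1' e2' have "K c e = 0" by (simp add: algebra_simps)
    then show ?thesis using ne by simp
  qed
qed




definition PR :: "(nat \<Rightarrow> 'a op) \<Rightarrow> nat \<Rightarrow> 'a list \<Rightarrow> 'a list \<Rightarrow> complex" where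
  "PR R n ys ws = (\<Prod>i<n. R i (ys!i) (ws!i))"

definition Psi :: "('a \<times> 'b::finite) op \<Rightarrow> nat \<Rightarrow> (nat \<Rightarrow> 'a op) \<Rightarrow> 'b op \<Rightarrow> 'b op" where
  "Psi U n R X = (\<lambda>d d'. \<Sum>xs\<in>lists_len n. SS U n (PR R n) xs xs X d d')"

definition Gf :: "('a \<times> 'b::finite) op \<Rightarrow> 'a \<Rightarrow> 'a \<Rightarrow> 'a \<Rightarrow> 'a \<Rightarrow> 'b op \<Rightarrow> complex" where
  "Gf U a a' y w Y = (\<Sum>b\<in>UNIV. sand (Mop U a y) Y (Mop U a' w) b b)"

lemma ptrace1_reindex:
  fixes g :: "'a::finite list \<Rightarrow> 'b::finite \<Rightarrow> complex"
  shows "(\<Sum>(xs,b)\<in>{xs\<in>lists_len (Suc n). xs!n = a} \<times> UNIV. g xs b) = (\<Sum>xs1\<in>lists_len n. \<Sum>b\<in>UNIV. g (xs1@[a]) b)"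
proof -
  have "(\<Sum>(xs,b)\<in>{xs\<in>lists_len (Suc n). xs!n = a} \<times> UNIV. g xs b) = (\<Sum>xs\<in>{xs\<in>lists_len (Suc n). xs!n = a}. \<Sum>b\<in>UNIV. g xs b)"
    by (simp add: sum.cartesian_product)
  also have "\<dots> = (\<Sum>xs\<in>lists_len (n + Suc 0). if xs!n = a then (\<Sum>b\<in>UNIV. g xs b) else 0)"
    by (simp add: sum.inter_filter)
  also have "\<dots> = (\<Sum>xs1\<in>lists_len n. \<Sum>x\<in>UNIV. if x = a then (\<Sum>b\<in>UNIV. g (xs1@[x]) b) else 0)"
    unfolding sum_lists_len_add sum_lists_len_1 by (intro sum.cong refl) (auto simp: lists_len_def nth_append)
  also have "\<dots> = (\<Sum>xs1\<in>lists_len n. \<Sum>b\<in>UNIV. g (xs1@[a]) b)" by simp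
  finally show ?thesis .
qed

lemma chan_formula:
  fixes U :: "('a::finite \<times> 'b::finite) op"
  shows "chan U n R \<xi> \<omega> a a' = (\<Sum>y\<in>UNIV. \<Sum>w\<in>UNIV. \<omega> y w * Gf U a a' y w (Psi U n R \<xi>))"
proof -
  define \<rho>s where "\<rho>s = (\<lambda>i. if i < n then R i else \<omega>)"
  define Pc where "Pc = (\<lambda>ys ws. \<Prod>i<Suc n. \<rho>s i (ys ! i) (ws ! i))"
  have fac: "Pc (ys1@ys2) (ws1@ws2) = PR R n ys1 ws1 * (\<lambda>ys ws. \<omega> (ys!0) (ws!0)) ys2 ws2"
    if "length ys1 = n" "length ws1 = n" "length ys2 = Suc 0" "length ws2 = Suc 0" for ys1 ws1 ys2 ws2
    using that unfolding Pc_def PR_def \<rho>s_def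
    by (simp add: nth_append)
  have "chan U n R \<xi> \<omega> a a' = (\<Sum>xs1\<in>lists_len n. \<Sum>b\<in>UNIV.
      evolve (Suc n) U (prod_in \<rho>s (Suc n) \<xi>) (xs1@[a], b) ((xs1@[a])[n := a'], b))"
    unfolding chan_def ptrace1_def \<rho>s_def by (rule ptrace1_reindex)
  also have "\<dots> = (\<Sum>xs1\<in>lists_len n. \<Sum>b\<in>UNIV. SS U (n + Suc 0) Pc (xs1@[a]) (xs1@[a']) \<xi> b b)"
  proof (intro sum.cong refl)
    fix xs1 :: "'a list" and b assume "xs1 \<in> lists_len n"
    then have l: "length xs1 = n" by (simp add: lists_len_def)
    have u: "(xs1@[a])[n := a'] = xs1@[a']" using l by (metis list_update_length)
    show "evolve (Suc n) U (prod_in \<rho>s (Suc n) \<xi>) (xs1@[a], b) ((xs1@[a])[n := a'], b) = SS U (n + Suc 0) Pc (xs1@[a]) (xs1@[a']) \<xi> b b"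
      unfolding u using evolve_SS[of "xs1@[a]" "Suc n" "xs1@[a']" "prod_in \<rho>s (Suc n) \<xi>" Pc \<xi> U b b] l
      by (simp add: prod_in_def Pc_def)
  qed
  also have "\<dots> = (\<Sum>xs1\<in>lists_len n. \<Sum>b\<in>UNIV. SS U (Suc 0) (\<lambda>ys ws. \<omega> (ys!0) (ws!0)) [a] [a'] (SS U n (PR R n) xs1 xs1 \<xi>) b b)"
  proof (intro sum.cong refl)
    fix xs1 :: "'a list" and b assume "xs1 \<in> lists_len n"
    then have l: "length xs1 = n" by (simp add: lists_len_def)
    have "SS U (n + Suc 0) Pc (xs1@[a]) (xs1@[a']) \<xi> = SS U (Suc 0) (\<lambda>ys ws. \<omega> (ys!0) (ws!0)) [a] [a'] (SS U n (PR R n) xs1 xs1 \<xi>)"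
      by (rule SS_comp) (simp_all add: l fac)
    then show "SS U (n + Suc 0) Pc (xs1@[a]) (xs1@[a']) \<xi> b b = SS U (Suc 0) (\<lambda>ys ws. \<omega> (ys!0) (ws!0)) [a] [a'] (SS U n (PR R n) xs1 xs1 \<xi>) b b"
      by simp
  qed
  also have "\<dots> = (\<Sum>xs1\<in>lists_len n. \<Sum>b\<in>UNIV. \<Sum>y\<in>UNIV. \<Sum>w\<in>UNIV. \<omega> y w * sand (Mop U a y) (SS U n (PR R n) xs1 xs1 \<xi>) (Mop U a' w) b b)"
    by (simp add: SS_one)
  also have "\<dots> = (\<Sum>y\<in>UNIV. \<Sum>w\<in>UNIV. \<Sum>xs1\<in>lists_len n. \<Sum>b\<in>UNIV. \<omega> y w * sand (Mop U a y) (SS U n (PR R n) xs1 xs1 \<xi>) (Mop U a' w) b b)"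
    by (rule swap4)
  also have "\<dots> = (\<Sum>y\<in>UNIV. \<Sum>w\<in>UNIV. \<omega> y w * Gf U a a' y w (Psi U n R \<xi>))"
    unfolding Gf_def Psi_def sand_sum
    by (intro sum.cong refl) (simp add: sum_distrib_left, rule sum.swap)
  finally show ?thesis .
qed

lemma Psi_lin: "Psi U n R (\<lambda>c e. \<Sum>k\<in>K. \<alpha> k * f k c e) d d' = (\<Sum>k\<in>K. \<alpha> k * Psi U n R (f k) d d')"
  unfolding Psi_def SS_lin by (simp add: sum_distrib_left) (rule sum.swap)

lemma Psi_lin_fun: "Psi U n R (\<lambda>c e. \<Sum>k\<in>K. \<alpha> k * f k c e) = (\<lambda>d d'. \<Sum>k\<in>K. \<alpha> k * Psi U n R (f k) d d')"
  by (intro ext) (rule Psi_lin)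

lemma Gf_lin: "Gf U a a' y w (\<lambda>c e. \<Sum>k\<in>K. \<alpha> k * f k c e) = (\<Sum>k\<in>K. \<alpha> k * Gf U a a' y w (f k))"
  unfolding Gf_def sand_lin by (simp add: sum_distrib_left) (rule sum.swap)

lemma op_decomp: fixes X :: "'i::finite op" shows "X = (\<lambda>c e. \<Sum>p\<in>UNIV. X (fst p) (snd p) * unit_op (fst p) (snd p) c e)"
proof (intro ext)
  fix c e
  have "\<And>p. X (fst p) (snd p) * unit_op (fst p) (snd p) c e = (if p = (c,e) then X c e else 0)"
    by (auto simp: unit_op_def)
  then show "X c e = (\<Sum>p\<in>UNIV. X (fst p) (snd p) * unit_op (fst p) (snd p) c e)"
    by (simp only:) (subst sum.delta, simp_all)
qed

lemma depth_lemma: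
  fixes U :: "('a::finite \<times> 'b::finite) op"
  assumes dep: "depth_ok U n" and R: "\<forall>i<n. is_state (R i)" and x0: "is_state \<xi>0"
  shows "Gf U a a' y w (Psi U n R X) = (\<Sum>c\<in>UNIV. X c c) * chan U n R \<xi>0 (unit_op y w) a a'"
proof -
  define h where "h = (\<lambda>y w X. Gf U a a' y w (Psi U n R X))"
  have cf: "\<And>\<xi> \<omega>. chan U n R \<xi> \<omega> a a' = (\<Sum>y\<in>UNIV. \<Sum>w\<in>UNIV. \<omega> y w * h y w \<xi>)"
    by (simp add: chan_formula h_def)
  have inv: "h y w \<xi>1 = h y w \<xi>0" if st1: "is_state \<xi>1" for \<xi>1 y w
  proof -
    have "h y w \<xi>1 - h y w \<xi>0 = (if y = w then 0 else 0)"
    proof (rule span)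
      fix S :: "'a op" assume S: "is_state S"
      have "chan U n R \<xi>1 S = chan U n R \<xi>0 S"
        using dep st1 x0 R S unfolding depth_ok_def by blast
      then have "(\<Sum>y\<in>UNIV. \<Sum>w\<in>UNIV. S y w * h y w \<xi>1) = (\<Sum>y\<in>UNIV. \<Sum>w\<in>UNIV. S y w * h y w \<xi>0)"
        using cf by metis
      then show "(\<Sum>y\<in>UNIV. \<Sum>w\<in>UNIV. S y w * (h y w \<xi>1 - h y w \<xi>0)) = 0"
        by (simp add: right_diff_distrib sum_subtractf)
    qed
    then show ?thesis by simp
  qed
  have lin: "h y w X = (\<Sum>c\<in>UNIV. \<Sum>e\<in>UNIV. X c e * h y w (unit_op c e))" for X y w
  proof -
    have "h y w X = h y w (\<lambda>c e. \<Sum>p\<in>UNIV. X (fst p) (snd p) * unit_op (fst p) (snd p) c e)"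
      by (subst op_decomp[of X]) (rule refl)
    also have "\<dots> = (\<Sum>p\<in>UNIV. X (fst p) (snd p) * h y w (unit_op (fst p) (snd p)))"
      unfolding h_def Psi_lin_fun Gf_lin by simp
    also have "\<dots> = (\<Sum>c\<in>UNIV. \<Sum>e\<in>UNIV. X c e * h y w (unit_op c e))"
      by (simp add: sum.cartesian_product split_beta)
    finally show ?thesis .
  qed
  have unitv: "h y w (unit_op c e) = (if c = e then h y w \<xi>0 else 0)" for c e
  proof (rule span)
    fix S :: "'b op" assume "is_state S"
    then show "(\<Sum>c\<in>UNIV. \<Sum>e\<in>UNIV. S c e * h y w (unit_op c e)) = h y w \<xi>0"
      using lin[of y w S] inv by simp
  qed
  have "h y w X = (\<Sum>c\<in>UNIV. X c c) * h y w \<xi>0"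
  proof -
    have "h y w X = (\<Sum>c\<in>UNIV. \<Sum>e\<in>UNIV. X c e * h y w (unit_op c e))" by (rule lin)
    also have "\<dots> = (\<Sum>c\<in>UNIV. \<Sum>e\<in>UNIV. if e = c then X c e * h y w \<xi>0 else 0)"
      by (intro sum.cong refl) (simp add: unitv)
    also have "\<dots> = (\<Sum>c\<in>UNIV. X c c) * h y w \<xi>0" by (simp add: sum_distrib_right)
    finally show ?thesis .
  qed
  moreover have "chan U n R \<xi>0 (unit_op y w) a a' = h y w \<xi>0"
  proof -
    have "\<And>y' w'. unit_op y w y' w' * h y' w' \<xi>0 = (if w' = w then (if y' = y then h y' w' \<xi>0 else 0) else 0)"
      by (simp add: unit_op_def)
    then show ?thesis unfolding cf by simp
  qed
  ultimately show ?thesis by (simp add: h_def)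
qed




lemma ptrace2_reindex:
  fixes g :: "'a::finite list \<Rightarrow> complex"
  shows "(\<Sum>xs\<in>{xs\<in>lists_len (2*n+2). xs!n = a1 \<and> xs!(2*n+1) = a2}. g xs)
       = (\<Sum>xs1\<in>lists_len n. \<Sum>xs2\<in>lists_len n. g (xs1 @ a1 # xs2 @ [a2]))"
proof -
  have e: "2*n+2 = ((n + Suc 0) + n) + Suc 0" by simp
  have "(\<Sum>xs\<in>{xs\<in>lists_len (2*n+2). xs!n = a1 \<and> xs!(2*n+1) = a2}. g xs)
      = (\<Sum>xs\<in>lists_len (((n + Suc 0) + n) + Suc 0). if xs!n = a1 \<and> xs!(2*n+1) = a2 then g xs else 0)"
    unfolding e by (simp add: sum.inter_filter)
  also have "\<dots> = (\<Sum>xs1\<in>lists_len n. \<Sum>y\<in>UNIV. \<Sum>xs2\<in>lists_len n. \<Sum>x\<in>UNIV.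
      if x = a2 then (if y = a1 then g (xs1 @ y # xs2 @ [x]) else 0) else 0)"
    unfolding sum_lists_len_add sum_lists_len_1
    by (intro sum.cong refl) (auto simp: lists_len_def nth_append)
  also have "\<dots> = (\<Sum>xs1\<in>lists_len n. \<Sum>xs2\<in>lists_len n. \<Sum>y\<in>UNIV. \<Sum>x\<in>UNIV.
      if x = a2 then (if y = a1 then g (xs1 @ y # xs2 @ [x]) else 0) else 0)"
    by (rule sum.cong[OF refl], rule sum.swap)
  also have "\<dots> = (\<Sum>xs1\<in>lists_len n. \<Sum>xs2\<in>lists_len n. g (xs1 @ a1 # xs2 @ [a2]))"
    by simp
  finally show ?thesis .
qed

lemma unit_pair: "unit_op (y1,y2) (w1,w2) (p1,p2) (q1,q2) = unit_op y1 w1 p1 q1 * unit_op y2 w2 p2 q2"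
  by (simp add: unit_op_def)

lemma SS_unit:
  fixes U :: "('a::finite \<times> 'b::finite) op"
  shows "SS U (Suc 0) (\<lambda>ys ws. unit_op y w (ys!0) (ws!0)) [a] [a'] X = sand (Mop U a y) X (Mop U a' w)"
proof (intro ext)
  fix d d'
  have "\<And>y' w'. unit_op y w y' w' * sand (Mop U a y') X (Mop U a' w') d d'
     = (if w' = w then (if y' = y then sand (Mop U a y') X (Mop U a' w') d d' else 0) else 0)"
    by (simp add: unit_op_def)
  then show "SS U (Suc 0) (\<lambda>ys ws. unit_op y w (ys!0) (ws!0)) [a] [a'] X d d' = sand (Mop U a y) X (Mop U a' w) d d'"
    by (simp add: SS_one)
qed

lemma SS_joint:
  fixes U :: "('a::finite \<times> 'b::finite) op"
  assumes l1: "length xs1 = n" and l2: "length xs2 = n"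
  shows "SS U (2*n+2) (\<lambda>ys ws. PR R n ys ws * unit_op (y1,y2) (w1,w2) (ys!n, ys!(2*n+1)) (ws!n, ws!(2*n+1))
            * (\<Prod>i<n. R' i (ys!(n+1+i)) (ws!(n+1+i)))) (xs1 @ a1 # xs2 @ [a2]) (xs1 @ a1' # xs2 @ [a2']) X
    = sand (Mop U a2 y2) (SS U n (PR R' n) xs2 xs2 (sand (Mop U a1 y1) (SS U n (PR R n) xs1 xs1 X) (Mop U a1' w1))) (Mop U a2' w2)"
proof -
  define Q where "Q = (\<lambda>ys ws. PR R n ys ws * unit_op (y1,y2) (w1,w2) (ys!n, ys!(2*n+1)) (ws!n, ws!(2*n+1))
            * (\<Prod>i<n. R' i (ys!(n+1+i)) (ws!(n+1+i))))"
  define Q' where "Q' = (\<lambda>ys ws. PR R n ys ws * unit_op y1 w1 (ys!n) (ws!n)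
            * (\<Prod>i<n. R' i (ys!(n+1+i)) (ws!(n+1+i))))"
  define Q'' where "Q'' = (\<lambda>ys ws. PR R n ys ws * unit_op y1 w1 (ys!n) (ws!n))"
  have e: "2*n+2 = ((n + Suc 0) + n) + Suc 0" by simp
  have c3: "SS U (((n + Suc 0) + n) + Suc 0) Q (((xs1@[a1])@xs2)@[a2]) (((xs1@[a1'])@xs2)@[a2']) X
      = SS U (Suc 0) (\<lambda>ys ws. unit_op y2 w2 (ys!0) (ws!0)) [a2] [a2'] (SS U ((n + Suc 0) + n) Q' ((xs1@[a1])@xs2) ((xs1@[a1'])@xs2) X)"
  proof (rule SS_comp)
    fix ys1 ws1 ys2 ws2 :: "'a list"
    assume "length ys1 = n + Suc 0 + n" "length ws1 = n + Suc 0 + n" "length ys2 = Suc 0" "length ws2 = Suc 0"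
    then show "Q (ys1 @ ys2) (ws1 @ ws2) = Q' ys1 ws1 * unit_op y2 w2 (ys2!0) (ws2!0)"
      unfolding Q_def Q'_def PR_def unit_pair by (simp add: nth_append)
  qed (use l1 l2 in simp_all)
  have c2: "SS U ((n + Suc 0) + n) Q' ((xs1@[a1])@xs2) ((xs1@[a1'])@xs2) X
      = SS U n (PR R' n) xs2 xs2 (SS U (n + Suc 0) Q'' (xs1@[a1]) (xs1@[a1']) X)"
  proof (rule SS_comp)
    fix ys1 ws1 ys2 ws2 :: "'a list"
    assume "length ys1 = n + Suc 0" "length ws1 = n + Suc 0" "length ys2 = n" "length ws2 = n"
    then show "Q' (ys1 @ ys2) (ws1 @ ws2) = Q'' ys1 ws1 * PR R' n ys2 ws2"
      unfolding Q'_def Q''_def PR_def by (simp add: nth_append)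
  qed (use l1 l2 in simp_all)
  have c1: "SS U (n + Suc 0) Q'' (xs1@[a1]) (xs1@[a1']) X
      = SS U (Suc 0) (\<lambda>ys ws. unit_op y1 w1 (ys!0) (ws!0)) [a1] [a1'] (SS U n (PR R n) xs1 xs1 X)"
  proof (rule SS_comp)
    fix ys1 ws1 ys2 ws2 :: "'a list"
    assume "length ys1 = n" "length ws1 = n" "length ys2 = Suc 0" "length ws2 = Suc 0"
    then show "Q'' (ys1 @ ys2) (ws1 @ ws2) = PR R n ys1 ws1 * unit_op y1 w1 (ys2!0) (ws2!0)"
      unfolding Q''_def PR_def by (simp add: nth_append)
  qed (use l1 l2 in simp_all)
  have "SS U (2*n+2) Q (xs1 @ a1 # xs2 @ [a2]) (xs1 @ a1' # xs2 @ [a2']) X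
      = SS U (((n + Suc 0) + n) + Suc 0) Q (((xs1@[a1])@xs2)@[a2]) (((xs1@[a1'])@xs2)@[a2']) X"
    by (simp only: e) simp
  also have "\<dots> = sand (Mop U a2 y2) (SS U n (PR R' n) xs2 xs2 (sand (Mop U a1 y1) (SS U n (PR R n) xs1 xs1 X) (Mop U a1' w1))) (Mop U a2' w2)"
    unfolding c3 c2 c1 SS_unit ..
  finally show ?thesis unfolding Q_def .
qed




lemma sum_prodU:
  fixes f :: "'p::finite \<times> 'q::finite \<Rightarrow> complex"
  shows "(\<Sum>k\<in>UNIV. f k) = (\<Sum>p\<in>UNIV. \<Sum>q\<in>UNIV. f (p,q))"
proof -
  have "(\<Sum>k\<in>UNIV. f k) = (\<Sum>k\<in>UNIV \<times> UNIV. f k)" by simp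
  also have "\<dots> = (\<Sum>p\<in>UNIV. \<Sum>q\<in>UNIV. f (p,q))" by (rule sum_pair)
  finally show ?thesis .
qed

lemma sum4:
  fixes f :: "('a::finite \<times> 'a) \<times> ('a \<times> 'a) \<Rightarrow> complex"
  shows "(\<Sum>k\<in>UNIV. f k) = (\<Sum>a\<in>UNIV. \<Sum>a'\<in>UNIV. \<Sum>c\<in>UNIV. \<Sum>c'\<in>UNIV. f ((a,c),(a',c')))"
proof -
  have "(\<Sum>k\<in>UNIV. f k) = (\<Sum>a\<in>UNIV. \<Sum>c\<in>UNIV. \<Sum>a'\<in>UNIV. \<Sum>c'\<in>UNIV. f ((a,c),(a',c')))"
  proof -
    have "(\<Sum>k\<in>UNIV. f k) = (\<Sum>p\<in>UNIV. \<Sum>q\<in>UNIV. f (p,q))" by (rule sum_prodU)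
    also have "\<dots> = (\<Sum>a\<in>UNIV. \<Sum>c\<in>UNIV. \<Sum>q\<in>UNIV. f ((a,c),q))"
      by (rule sum_prodU[of "\<lambda>p. \<Sum>q\<in>UNIV. f (p,q)"])
    also have "\<dots> = (\<Sum>a\<in>UNIV. \<Sum>c\<in>UNIV. \<Sum>a'\<in>UNIV. \<Sum>c'\<in>UNIV. f ((a,c),(a',c')))"
      by (intro sum.cong refl) (rule sum_prodU)
    finally show ?thesis .
  qed
  also have "\<dots> = (\<Sum>a\<in>UNIV. \<Sum>a'\<in>UNIV. \<Sum>c\<in>UNIV. \<Sum>c'\<in>UNIV. f ((a,c),(a',c')))"
    by (rule sum.cong[OF refl], rule sum.swap)
  finally show ?thesis .
qed

lemma swap_out3: "(\<Sum>a\<in>A. \<Sum>b\<in>B. \<Sum>c\<in>C. \<Sum>k\<in>K. f a b c k) = (\<Sum>k\<in>K. \<Sum>a\<in>A. \<Sum>b\<in>B. \<Sum>c\<in>C. f a b c k)"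
proof -
  have "(\<Sum>a\<in>A. \<Sum>b\<in>B. \<Sum>c\<in>C. \<Sum>k\<in>K. f a b c k) = (\<Sum>a\<in>A. \<Sum>k\<in>K. \<Sum>b\<in>B. \<Sum>c\<in>C. f a b c k)"
    by (rule sum.cong[OF refl], rule swap3)
  also have "\<dots> = (\<Sum>k\<in>K. \<Sum>a\<in>A. \<Sum>b\<in>B. \<Sum>c\<in>C. f a b c k)" by (rule sum.swap)
  finally show ?thesis .
qed

lemma sand_sum_fun: "sand A (\<lambda>c e. \<Sum>k\<in>K. f k c e) B = (\<lambda>d d'. \<Sum>k\<in>K. sand A (f k) B d d')"
  by (intro ext) (rule sand_sum)

lemma Psi_sum_fun: "Psi U n R (\<lambda>c e. \<Sum>k\<in>K. f k c e) = (\<lambda>d d'. \<Sum>k\<in>K. Psi U n R (f k) d d')"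
  using Psi_lin_fun[of U n R "\<lambda>_. 1" f K] by simp

lemma Gf_sum: "Gf U a a' y w (\<lambda>c e. \<Sum>k\<in>K. f k c e) = (\<Sum>k\<in>K. Gf U a a' y w (f k))"
  using Gf_lin[of U a a' y w "\<lambda>_. 1" f K] by simp

lemma Gf_nested:
  fixes U :: "('a::finite \<times> 'b::finite) op"
  shows "Gf U a2 a2' y2 w2 (Psi U n R' (sand (Mop U a1 y1) (Psi U n R \<xi>) (Mop U a1' w1)))
    = (\<Sum>xs1\<in>lists_len n. \<Sum>xs2\<in>lists_len n. \<Sum>b\<in>UNIV.
         sand (Mop U a2 y2) (SS U n (PR R' n) xs2 xs2 (sand (Mop U a1 y1) (SS U n (PR R n) xs1 xs1 \<xi>) (Mop U a1' w1))) (Mop U a2' w2) b b)"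
proof -
  have "Gf U a2 a2' y2 w2 (Psi U n R' (sand (Mop U a1 y1) (Psi U n R \<xi>) (Mop U a1' w1)))
     = (\<Sum>xs1\<in>lists_len n. Gf U a2 a2' y2 w2 (Psi U n R' (sand (Mop U a1 y1) (SS U n (PR R n) xs1 xs1 \<xi>) (Mop U a1' w1))))"
    by (simp only: Psi_def[of U n R \<xi>] sand_sum_fun Psi_sum_fun Gf_sum)
  also have "\<dots> = (\<Sum>xs1\<in>lists_len n. \<Sum>xs2\<in>lists_len n. Gf U a2 a2' y2 w2 (SS U n (PR R' n) xs2 xs2 (sand (Mop U a1 y1) (SS U n (PR R n) xs1 xs1 \<xi>) (Mop U a1' w1))))"
    by (simp only: Psi_def Gf_sum)
  also have "\<dots> = (\<Sum>xs1\<in>lists_len n. \<Sum>xs2\<in>lists_len n. \<Sum>b\<in>UNIV.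
         sand (Mop U a2 y2) (SS U n (PR R' n) xs2 xs2 (sand (Mop U a1 y1) (SS U n (PR R n) xs1 xs1 \<xi>) (Mop U a1' w1))) (Mop U a2' w2) b b)"
    by (simp only: Gf_def)
  finally show ?thesis .
qed

theorem theorem1:
  fixes U :: "('a::finite \<times> 'b::finite) op"
    and n :: nat
    and R R' :: "nat \<Rightarrow> 'a op"
    and \<omega>12 :: "('a \<times> 'a) op"
    and \<xi> \<xi>1 \<xi>2 :: "'b op"
  assumes "unitary_op U"
    and "\<exists>\<Delta>. depth_ok U \<Delta>"
    and "memory_depth U = n"
    and "\<forall>i<n. is_state (R i)"
    and "\<forall>i<n. is_state (R' i)"
    and "is_state \<omega>12"
    and "is_state \<xi>"
    and "is_state \<xi>1"
    and "is_state \<xi>2"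
  shows "ptrace2 (2 * n + 2) n (2 * n + 1) (evolve (2 * n + 2) U (joint_in n R R' \<omega>12 \<xi>))
           = chan_tensor (chan U n R \<xi>1) (chan U n R' \<xi>2) \<omega>12"
proof (intro ext)
  fix p q :: "'a \<times> 'a"
  obtain a1 a2 where p: "p = (a1,a2)" by (cases p)
  obtain a1' a2' where q: "q = (a1',a2')" by (cases q)
  have dep: "depth_ok U n"
    using assms(2,3) unfolding memory_depth_def by (metis LeastI_ex)
  have tr: "(\<Sum>c\<in>UNIV. \<xi> c c) = 1" using assms(7) by (simp add: is_state_def)
  define Pj where "Pj = (\<lambda>ys ws. PR R n ys ws * \<omega>12 (ys!n, ys!(2*n+1)) (ws!n, ws!(2*n+1))
            * (\<Prod>i<n. R' i (ys!(n+1+i)) (ws!(n+1+i))))"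
  define Qk where "Qk = (\<lambda>k ys ws. PR R n ys ws * unit_op (fst k) (snd k) (ys!n, ys!(2*n+1)) (ws!n, ws!(2*n+1))
            * (\<Prod>i<n. R' i (ys!(n+1+i)) (ws!(n+1+i))))"
  have Pj_dec: "Pj = (\<lambda>ys ws. \<Sum>k\<in>UNIV. \<omega>12 (fst k) (snd k) * Qk k ys ws)"
  proof (intro ext)
    fix ys ws :: "'a list"
    have "Pj ys ws = PR R n ys ws * (\<Sum>k\<in>UNIV. \<omega>12 (fst k) (snd k) * unit_op (fst k) (snd k) (ys!n, ys!(2*n+1)) (ws!n, ws!(2*n+1)))
            * (\<Prod>i<n. R' i (ys!(n+1+i)) (ws!(n+1+i)))"
      unfolding Pj_def by (subst op_decomp[of \<omega>12]) (rule refl)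
    then show "Pj ys ws = (\<Sum>k\<in>UNIV. \<omega>12 (fst k) (snd k) * Qk k ys ws)"
      unfolding Qk_def by (simp add: sum_distrib_left sum_distrib_right mult_ac)
  qed
  let ?T = "\<lambda>k xs1 xs2 b. sand (Mop U a2 (snd (fst k))) (SS U n (PR R' n) xs2 xs2
        (sand (Mop U a1 (fst (fst k))) (SS U n (PR R n) xs1 xs1 \<xi>) (Mop U a1' (fst (snd k))))) (Mop U a2' (snd (snd k))) b b"
  have "ptrace2 (2 * n + 2) n (2 * n + 1) (evolve (2 * n + 2) U (joint_in n R R' \<omega>12 \<xi>)) p q
     = (\<Sum>xs\<in>{xs\<in>lists_len (2*n+2). xs!n = a1 \<and> xs!(2*n+1) = a2}. \<Sum>b\<in>UNIV.
          evolve (2 * n + 2) U (joint_in n R R' \<omega>12 \<xi>) (xs, b) (xs[n := a1', 2*n+1 := a2'], b))"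
    unfolding ptrace2_def p q by (simp add: sum.cartesian_product)
  also have "\<dots> = (\<Sum>xs1\<in>lists_len n. \<Sum>xs2\<in>lists_len n. \<Sum>b\<in>UNIV.
          evolve (2 * n + 2) U (joint_in n R R' \<omega>12 \<xi>) (xs1 @ a1 # xs2 @ [a2], b) ((xs1 @ a1 # xs2 @ [a2])[n := a1', 2*n+1 := a2'], b))"
    by (rule ptrace2_reindex)
  also have "\<dots> = (\<Sum>xs1\<in>lists_len n. \<Sum>xs2\<in>lists_len n. \<Sum>b\<in>UNIV. \<Sum>k\<in>UNIV. \<omega>12 (fst k) (snd k) * ?T k xs1 xs2 b)"
  proof (intro sum.cong refl)
    fix xs1 xs2 :: "'a list" and b
    assume "xs1 \<in> lists_len n" "xs2 \<in> lists_len n"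
    then have l1: "length xs1 = n" and l2: "length xs2 = n" by (auto simp: lists_len_def)
    have upd: "(xs1 @ a1 # xs2 @ [a2])[n := a1', 2*n+1 := a2'] = xs1 @ a1' # xs2 @ [a2']"
      using l1 l2 by (simp add: list_update_append)
    have ev: "evolve (2 * n + 2) U (joint_in n R R' \<omega>12 \<xi>) (xs1 @ a1 # xs2 @ [a2], b) (xs1 @ a1' # xs2 @ [a2'], b)
        = SS U (2*n+2) Pj (xs1 @ a1 # xs2 @ [a2]) (xs1 @ a1' # xs2 @ [a2']) \<xi> b b"
      by (rule evolve_SS) (use l1 l2 in \<open>simp_all add: joint_in_def Pj_def PR_def\<close>)
    have "SS U (2*n+2) Pj (xs1 @ a1 # xs2 @ [a2]) (xs1 @ a1' # xs2 @ [a2']) \<xi> b b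
       = (\<Sum>k\<in>UNIV. \<omega>12 (fst k) (snd k) * SS U (2*n+2) (Qk k) (xs1 @ a1 # xs2 @ [a2]) (xs1 @ a1' # xs2 @ [a2']) \<xi> b b)"
      unfolding Pj_dec by (rule SS_linP)
    also have "\<dots> = (\<Sum>k\<in>UNIV. \<omega>12 (fst k) (snd k) * ?T k xs1 xs2 b)"
    proof (intro sum.cong refl)
      fix k :: "('a \<times> 'a) \<times> ('a \<times> 'a)"
      have "Qk k = (\<lambda>ys ws. PR R n ys ws * unit_op (fst (fst k), snd (fst k)) (fst (snd k), snd (snd k)) (ys!n, ys!(2*n+1)) (ws!n, ws!(2*n+1))
            * (\<Prod>i<n. R' i (ys!(n+1+i)) (ws!(n+1+i))))"
        unfolding Qk_def by simp
      then show "\<omega>12 (fst k) (snd k) * SS U (2*n+2) (Qk k) (xs1 @ a1 # xs2 @ [a2]) (xs1 @ a1' # xs2 @ [a2']) \<xi> b b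
          = \<omega>12 (fst k) (snd k) * ?T k xs1 xs2 b"
        using SS_joint[OF l1 l2, of U R "fst (fst k)" "snd (fst k)" "fst (snd k)" "snd (snd k)" R' a1 a2 a1' a2' \<xi>]
        by simp
    qed
    finally show "evolve (2 * n + 2) U (joint_in n R R' \<omega>12 \<xi>) (xs1 @ a1 # xs2 @ [a2], b) ((xs1 @ a1 # xs2 @ [a2])[n := a1', 2*n+1 := a2'], b)
        = (\<Sum>k\<in>UNIV. \<omega>12 (fst k) (snd k) * ?T k xs1 xs2 b)"
      unfolding upd ev .
  qed
  also have "\<dots> = (\<Sum>k\<in>UNIV. \<Sum>xs1\<in>lists_len n. \<Sum>xs2\<in>lists_len n. \<Sum>b\<in>UNIV. \<omega>12 (fst k) (snd k) * ?T k xs1 xs2 b)"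
    by (rule swap_out3)
  also have "\<dots> = (\<Sum>k\<in>UNIV. \<omega>12 (fst k) (snd k) *
       (chan U n R \<xi>1 (unit_op (fst (fst k)) (fst (snd k))) a1 a1' * chan U n R' \<xi>2 (unit_op (snd (fst k)) (snd (snd k))) a2 a2'))"
  proof (intro sum.cong refl)
    fix k :: "('a \<times> 'a) \<times> ('a \<times> 'a)"
    have "(\<Sum>xs1\<in>lists_len n. \<Sum>xs2\<in>lists_len n. \<Sum>b\<in>UNIV. ?T k xs1 xs2 b)
       = Gf U a2 a2' (snd (fst k)) (snd (snd k)) (Psi U n R' (sand (Mop U a1 (fst (fst k))) (Psi U n R \<xi>) (Mop U a1' (fst (snd k)))))"
      by (rule Gf_nested[symmetric])
    also have "\<dots> = (\<Sum>c\<in>UNIV. sand (Mop U a1 (fst (fst k))) (Psi U n R \<xi>) (Mop U a1' (fst (snd k))) c c)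
        * chan U n R' \<xi>2 (unit_op (snd (fst k)) (snd (snd k))) a2 a2'"
      by (rule depth_lemma[OF dep assms(5) assms(9)])
    also have "(\<Sum>c\<in>UNIV. sand (Mop U a1 (fst (fst k))) (Psi U n R \<xi>) (Mop U a1' (fst (snd k))) c c)
        = Gf U a1 a1' (fst (fst k)) (fst (snd k)) (Psi U n R \<xi>)"
      by (simp add: Gf_def)
    also have "\<dots> = chan U n R \<xi>1 (unit_op (fst (fst k)) (fst (snd k))) a1 a1'"
      using depth_lemma[OF dep assms(4) assms(8)] tr by simp
    finally have eq: "(\<Sum>xs1\<in>lists_len n. \<Sum>xs2\<in>lists_len n. \<Sum>b\<in>UNIV. ?T k xs1 xs2 b)
      = chan U n R \<xi>1 (unit_op (fst (fst k)) (fst (snd k))) a1 a1' * chan U n R' \<xi>2 (unit_op (snd (fst k)) (snd (snd k))) a2 a2'" .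
    have "(\<Sum>xs1\<in>lists_len n. \<Sum>xs2\<in>lists_len n. \<Sum>b\<in>UNIV. \<omega>12 (fst k) (snd k) * ?T k xs1 xs2 b)
      = \<omega>12 (fst k) (snd k) * (\<Sum>xs1\<in>lists_len n. \<Sum>xs2\<in>lists_len n. \<Sum>b\<in>UNIV. ?T k xs1 xs2 b)"
      by (simp add: sum_distrib_left)
    then show "(\<Sum>xs1\<in>lists_len n. \<Sum>xs2\<in>lists_len n. \<Sum>b\<in>UNIV. \<omega>12 (fst k) (snd k) * ?T k xs1 xs2 b)
      = \<omega>12 (fst k) (snd k) *
       (chan U n R \<xi>1 (unit_op (fst (fst k)) (fst (snd k))) a1 a1' * chan U n R' \<xi>2 (unit_op (snd (fst k)) (snd (snd k))) a2 a2')"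
      unfolding eq by (simp add: mult_ac)
  qed
  also have "\<dots> = chan_tensor (chan U n R \<xi>1) (chan U n R' \<xi>2) \<omega>12 p q"
    unfolding chan_tensor_def p q sum4 by (simp add: mult_ac)
  finally show "ptrace2 (2 * n + 2) n (2 * n + 1) (evolve (2 * n + 2) U (joint_in n R R' \<omega>12 \<xi>)) p q
      = chan_tensor (chan U n R \<xi>1) (chan U n R' \<xi>2) \<omega>12 p q" .
qed


end
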